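(* For every $n\ge 4$, if $G\sim G(n,1/2)$ then $\mathbb{P}(G\text{ is not even-degenerate})\ge (1/2)^{2n-3}$.
   Context: $G(n,1/2)$ is the uniformly random graph on $n$ labelled vertices. A graph $G$ on $n$ vertices is even-degenerate if there is an ordering $v_1,\dots,v_n$ of its vertices such that for each $1\le i\le n-2$, $v_i$ has an even number of neighbours in $\{v_{i+1},\dots,v_n\}$. *)

theory Defs
  imports "HOL-Probability.Probability"
begin

text \<open>Simple graphs on the labelled vertex set {0..<n}, represented by their edge sets
  (sets of 2-element subsets of {0..<n}).\<close>

definition all_edges :: "nat \<Rightarrow> nat set set" where
  "all_edges n = {{u, v} | u v. u < n \<and> v < n \<and> u \<noteq> v}"

definition Gnp_half :: "nat \<Rightarrow> nat set set pmf" where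
  "Gnp_half n = pmf_of_set (Pow (all_edges n))"

text \<open>Even-degenerate: there is an ordering v_0,...,v_(n-1) of the vertices such that for
  each position i (0-indexed) with i \<le> n-3 (i.e. 1-indexed 1 \<le> i \<le> n-2), v_i has an even
  number of neighbours among the later vertices.\<close>

definition even_degenerate :: "nat \<Rightarrow> nat set set \<Rightarrow> bool" where
  "even_degenerate n G \<longleftrightarrow>
     (\<exists>vs. distinct vs \<and> set vs = {0..<n} \<and>
        (\<forall>i. i + 2 < n \<longrightarrow>
           even (card {j. i < j \<and> j < n \<and> {vs ! i, vs ! j} \<in> G})))"

end

theory Submission
  imports Defs
begin

lemma handshake:
  assumes "finite H" "finite F" "\<forall>e\<in>H. card e = 2 \<and> e \<subseteq> F"
  shows "even (\<Sum>i\<in>F. card {u. {i,u} \<in> H})"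
  using assms
proof (induction H rule: finite_induct)
  case empty
  then show ?case by simp
next
  case (insert e H)
  obtain x y where e: "e = {x,y}" "x \<noteq> y" using insert.prems by (meson card_2_iff insertI1)
  have xy: "x \<in> F" "y \<in> F" using insert.prems e by auto
  have fin: "finite {u. {i,u} \<in> H}" for i
  proof -
    have "{u. {i,u} \<in> H} \<subseteq> \<Union>H" by auto
    moreover have "\<Union>H \<subseteq> F" using insert.prems by blast
    then have "finite (\<Union>H)" using insert.prems(1) by (rule finite_subset)
    ultimately show ?thesis by (rule finite_subset)
  qed
  have split: "{u. {i,u} \<in> insert e H} = {u. {i,u} \<in> H} \<union> {u. {i,u} = e}" for i by auto
  have disj: "{u. {i,u} \<in> H} \<inter> {u. {i,u} = e} = {}" for i using insert.hyps(2) by auto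
  have single: "{u. {i,u} = e} = (if i = x then {y} else if i = y then {x} else {})" for i
    using e by (auto simp: doubleton_eq_iff)
  have c: "card {u. {i,u} \<in> insert e H} = card {u. {i,u} \<in> H} + (if i = x \<or> i = y then 1 else 0)" for i
  proof -
    have "card {u. {i,u} \<in> insert e H} = card {u. {i,u} \<in> H} + card {u. {i,u} = e}"
      unfolding split by (rule card_Un_disjoint[OF fin _ disj]) (simp add: single)
    then show ?thesis using single[of i] e(2) by auto
  qed
  have xyset: "{i. i = x \<or> i = y} = {x,y}" by auto
  have "(\<Sum>i\<in>F. card {u. {i,u} \<in> insert e H}) = (\<Sum>i\<in>F. card {u. {i,u} \<in> H}) + (\<Sum>i\<in>F. (if i = x \<or> i = y then 1 else 0))"
    by (simp only: c sum.distrib)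
  also have "(\<Sum>i\<in>F. (if i = x \<or> i = y then 1::nat else 0)) = card (F \<inter> {x,y})"
    using insert.prems(1) xyset by (simp add: sum.If_cases)
  also have "F \<inter> {x,y} = {x,y}" using xy by auto
  finally show ?case using insert e by auto
qed

lemma count_eq:
  assumes "distinct vs" "set vs = {0..<n}" "i < n" "G \<subseteq> all_edges n"
    "\<forall>k<i. {vs!i, vs!k} \<notin> G"
  shows "card {j. i<j \<and> j<n \<and> {vs!i, vs!j} \<in> G} = card {u. {vs!i,u} \<in> G}"
proof -
  have len: "length vs = n" using distinct_card[OF assms(1)] assms(2) by simp
  have "{u. {vs!i,u} \<in> G} = (\<lambda>j. vs!j) ` {j. i<j \<and> j<n \<and> {vs!i, vs!j} \<in> G}"
  proof
    show "(\<lambda>j. vs!j) ` {j. i<j \<and> j<n \<and> {vs!i, vs!j} \<in> G} \<subseteq> {u. {vs!i,u} \<in> G}" by auto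
  next
    show "{u. {vs!i,u} \<in> G} \<subseteq> (\<lambda>j. vs!j) ` {j. i<j \<and> j<n \<and> {vs!i, vs!j} \<in> G}"
    proof
      fix u assume u: "u \<in> {u. {vs!i,u} \<in> G}"
      then have "{vs!i,u} \<in> all_edges n" using assms(4) by auto
      then have un: "u < n" and ne: "u \<noteq> vs!i" unfolding all_edges_def by (auto simp: doubleton_eq_iff)
      then obtain j where j: "j < n" "vs!j = u" using assms(2) len by (metis atLeastLessThan_iff in_set_conv_nth zero_le)
      have "j \<noteq> i" using ne j by auto
      moreover have "\<not> j < i" using assms(5) u j by auto
      ultimately show "u \<in> (\<lambda>j. vs!j) ` {j. i<j \<and> j<n \<and> {vs!i, vs!j} \<in> G}" using j u by auto
    qed
  qed
  moreover have "inj_on (\<lambda>j. vs!j) {j. i<j \<and> j<n \<and> {vs!i, vs!j} \<in> G}"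
    using inj_on_nth[OF assms(1)] len by auto
  ultimately show ?thesis by (simp add: card_image)
qed

definition Phi :: "nat \<Rightarrow> nat \<Rightarrow> nat set set \<Rightarrow> nat set set" where
  "Phi n a H = H \<union> {{a,i} | i. i \<in> {a<..<n} \<and> even (card {u. {i,u} \<in> H})}"

lemma good:
  assumes n4: "n \<ge> 4" and a1: "a \<le> 1" and par: "odd (n - a - 1)"
    and H: "H \<subseteq> {B. B \<subseteq> {a<..<n} \<and> card B = 2}"
  shows "Phi n a H \<subseteq> all_edges n" "\<not> even_degenerate n (Phi n a H)"
proof -
  define F where "F = {a<..<n}"
  define G where "G = Phi n a H"
  have Gdef: "G = H \<union> {{a,i} | i. i \<in> F \<and> even (card {u. {i,u} \<in> H})}"
    unfolding G_def Phi_def F_def by simp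
  have finF: "finite F" unfolding F_def by simp
  have cardF: "card F = n - a - 1" unfolding F_def by simp
  have aF: "a \<notin> F" unfolding F_def by simp
  have HF: "e \<in> H \<Longrightarrow> e \<subseteq> F \<and> card e = 2" for e using H F_def by auto
  have finH: "finite H" using H finite_subset[of H "Pow F"] finF unfolding F_def by auto
  show "Phi n a H \<subseteq> all_edges n"
  proof
    fix e assume "e \<in> Phi n a H"
    then have "e \<in> G" by (simp add: G_def)
    then show "e \<in> all_edges n"
    proof (cases "e \<in> H")
      case True
      then obtain x y where "e = {x,y}" "x \<noteq> y" using HF by (meson card_2_iff)
      moreover have "e \<subseteq> F" using HF True by auto
      ultimately show ?thesis unfolding all_edges_def F_def by auto
    next
      case False
      with \<open>e \<in> G\<close> obtain i where "e = {a,i}" "i \<in> F" unfolding Gdef by auto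
      moreover have "a < n" "i < n" "a \<noteq> i" using \<open>i \<in> F\<close> unfolding F_def by auto
      ultimately show ?thesis unfolding all_edges_def by blast
    qed
  qed
  then have GE: "G \<subseteq> all_edges n" by (simp add: G_def)
  have d1: "odd (card {u. {i,u} \<in> G})" if iF: "i \<in> F" for i
  proof -
    have ia: "i \<noteq> a" using iF aF by auto
    have eq: "{u. {i,u} \<in> G} = {u. {i,u} \<in> H} \<union> (if even (card {u. {i,u} \<in> H}) then {a} else {})"
    proof (rule set_eqI)
      fix u
      show "u \<in> {u. {i,u} \<in> G} \<longleftrightarrow> u \<in> {u. {i,u} \<in> H} \<union> (if even (card {u. {i,u} \<in> H}) then {a} else {})"
        unfolding Gdef using ia iF by (auto simp: doubleton_eq_iff)
    qed
    have "a \<notin> {u. {i,u} \<in> H}" using HF aF by auto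
    moreover have "finite {u. {i,u} \<in> H}"
      by (rule finite_subset[of _ F]) (use HF finF in auto)
    ultimately show ?thesis unfolding eq by auto
  qed
  have d2: "odd (card {u. {a,u} \<in> G})"
  proof -
    have eq: "{u. {a,u} \<in> G} = {i \<in> F. even (card {u. {i,u} \<in> H})}"
    proof (rule set_eqI)
      fix u
      show "u \<in> {u. {a,u} \<in> G} \<longleftrightarrow> u \<in> {i \<in> F. even (card {u. {i,u} \<in> H})}"
        unfolding Gdef using HF aF by (auto simp: doubleton_eq_iff)
    qed
    have "even (\<Sum>i\<in>F. card {u. {i,u} \<in> H})" using handshake[OF finH finF] HF by auto
    then have ev: "even (card {i\<in>F. odd (card {u. {i,u} \<in> H})})" using even_sum_iff[OF finF, of "\<lambda>i. card {u. {i,u} \<in> H}"] by (simp only:)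
    define P where "P = {i \<in> F. even (card {u. {i,u} \<in> H})}"
    define Q where "Q = {i \<in> F. odd (card {u. {i,u} \<in> H})}"
    have u: "P \<union> Q = F" unfolding P_def Q_def by blast
    have "card (P \<union> Q) = card P + card Q"
      by (rule card_Un_disjoint) (use finF in \<open>auto simp: P_def Q_def\<close>)
    then have cPQ: "card P + card Q = card F" using u by simp
    have oF: "odd (card F)" using par cardF by simp
    have oPQ: "odd (card P + card Q)" using cPQ oF by simp
    have eQ: "even (card Q)" using ev unfolding Q_def .
    have "odd (card P)" using oPQ eQ by simp
    then show ?thesis unfolding eq P_def .
  qed
  have d3: "{u. {0,u} \<in> G} = {}" if a1': "a = 1"
  proof -
    have "{0,u} \<notin> G" for u
    proof
      assume "{0,u} \<in> G"
      then consider "{0,u} \<in> H" | i where "{0,u} = {a,i}" "i \<in> F" unfolding Gdef by blast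
      then show False
      proof cases
        case 1
        then have "0 \<in> F" using HF by blast
        then show False unfolding F_def by simp
      next
        case (2 i)
        have "0 \<in> {a,i}" using 2(1) by (metis insertI1)
        then have "0 = a \<or> 0 = i" by simp
        then show False using 2(2) a1' unfolding F_def by auto
      qed
    qed
    then show ?thesis by simp
  qed
  have oddS: "odd (card {u. {v,u} \<in> G})" if "a \<le> v" "v < n" for v
  proof (cases "v = a")
    case True
    then show ?thesis using d2 by simp
  next
    case False
    then have "v \<in> F" using that unfolding F_def by simp
    then show ?thesis by (rule d1)
  qed
  show "\<not> even_degenerate n (Phi n a H)"
  proof
    assume "even_degenerate n (Phi n a H)"
    then obtain vs where vs: "distinct vs" "set vs = {0..<n}"
      and ev: "\<forall>i. i + 2 < n \<longrightarrow> even (card {j. i < j \<and> j < n \<and> {vs ! i, vs ! j} \<in> G})"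
      unfolding even_degenerate_def G_def by blast
    have len: "length vs = n" using distinct_card[OF vs(1)] vs(2) by simp
    have vn: "k < n \<Longrightarrow> vs!k < n" for k using vs(2) len nth_mem by fastforce
    show False
    proof (cases "a \<le> vs!0")
      case True
      have "card {j. 0<j \<and> j<n \<and> {vs!0, vs!j} \<in> G} = card {u. {vs!0,u} \<in> G}"
        by (rule count_eq[OF vs]) (use n4 GE in auto)
      then show False using ev[rule_format, of 0] oddS[OF True vn[of 0]] n4 by auto
    next
      case False
      then have a: "a = 1" "vs!0 = 0" using a1 by auto
      have "vs!1 \<noteq> vs!0" using vs(1) len n4 by (simp add: nth_eq_iff_index_eq)
      then have v1: "a \<le> vs!1" using a by auto
      have "card {j. 1<j \<and> j<n \<and> {vs!1, vs!j} \<in> G} = card {u. {vs!1,u} \<in> G}"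
      proof (rule count_eq[OF vs])
        show "\<forall>k<1. {vs!1, vs!k} \<notin> G"
        proof (intro allI impI)
          fix k :: nat assume "k < 1"
          then have "k = 0" by simp
          then show "{vs!1, vs!k} \<notin> G" using d3[OF a(1)] a(2) by (auto simp: insert_commute)
        qed
      qed (use n4 GE in auto)
      then show False using ev[rule_format, of 1] oddS[OF v1 vn[of 1]] n4 by auto
    qed
  qed
qed

theorem mainTheorem5:
  fixes n :: nat
  assumes "n \<ge> 4"
  shows "measure_pmf.prob (Gnp_half n) {G. \<not> even_degenerate n G} \<ge> (1/2) ^ (2 * n - 3)"
proof -
  define a :: nat where "a = (if even n then 0 else 1)"
  define F where "F = {a<..<n}"
  define E' where "E' = {B. B \<subseteq> F \<and> card B = 2}"
  define E where "E = all_edges n"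
  have a1: "a \<le> 1" unfolding a_def by simp
  have par: "odd (n - a - 1)" unfolding a_def using assms by (cases "even n") auto
  have Eeq: "E = {B. B \<subseteq> {0..<n} \<and> card B = 2}"
    proof (rule set_eqI)
    fix B
    show "B \<in> E \<longleftrightarrow> B \<in> {B. B \<subseteq> {0..<n} \<and> card B = 2}"
    proof
      assume "B \<in> E"
      then obtain u v where "B = {u,v}" "u < n" "v < n" "u \<noteq> v" unfolding E_def all_edges_def by blast
      then show "B \<in> {B. B \<subseteq> {0..<n} \<and> card B = 2}" by auto
    next
      assume "B \<in> {B. B \<subseteq> {0..<n} \<and> card B = 2}"
      then obtain u v where "B = {u,v}" "u \<noteq> v" "B \<subseteq> {0..<n}" by (auto simp: card_2_iff)
      then have "u < n" "v < n" by auto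
      then show "B \<in> E" unfolding E_def all_edges_def using \<open>B = {u,v}\<close> \<open>u \<noteq> v\<close> by blast
    qed
  qed
  have cardE: "card E = n choose 2" unfolding Eeq by (simp add: n_subsets)
  have cardE': "card E' = (n - a - 1) choose 2" unfolding E'_def F_def by (simp add: n_subsets)
  have finE: "finite E" unfolding Eeq by simp
  have finE': "finite E'" unfolding E'_def F_def by simp
  have sub: "Phi n a ` Pow E' \<subseteq> {G. \<not> even_degenerate n G} \<inter> Pow E"
    using good[OF assms a1 par] unfolding E'_def F_def E_def by blast
  have inj: "inj_on (Phi n a) (Pow E')"
  proof (rule inj_onI)
    fix H1 H2 assume h: "H1 \<in> Pow E'" "H2 \<in> Pow E'" "Phi n a H1 = Phi n a H2"
    have r: "Phi n a H \<inter> Pow F = H" if "H \<in> Pow E'" for H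
      using that unfolding Phi_def E'_def F_def by auto
    have "H1 = Phi n a H1 \<inter> Pow F" using r[OF h(1)] by (rule sym)
    also have "\<dots> = Phi n a H2 \<inter> Pow F" using h(3) by (rule arg_cong)
    also have "\<dots> = H2" by (rule r[OF h(2)])
    finally show "H1 = H2" .
  qed
  have "card (Pow E') \<le> card ({G. \<not> even_degenerate n G} \<inter> Pow E)"
    using card_inj_on_le[OF inj sub] finE by simp
  then have cnt: "(2::real) ^ card E' \<le> card ({G. \<not> even_degenerate n G} \<inter> Pow E)"
    using card_Pow[OF finE'] by (metis of_nat_le_iff of_nat_numeral of_nat_power)
  have PE: "Pow E \<noteq> {}" by blast
  have prob: "measure_pmf.prob (Gnp_half n) {G. \<not> even_degenerate n G}
      = card (Pow E \<inter> {G. \<not> even_degenerate n G}) / 2 ^ card E"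
    unfolding Gnp_half_def E_def[symmetric]
    using measure_pmf_of_set[of "Pow E" "{G. \<not> even_degenerate n G}"] finE card_Pow[OF finE] PE
    by simp
  have comb: "n choose 2 \<le> ((n - a - 1) choose 2) + (2 * n - 3)"
  proof -
    define k where "k = n - 2"
    have k: "n = Suc (Suc k)" using assms k_def by simp
    have p1: "Suc (Suc k) choose 2 = Suc k + (Suc k choose 2)" by (simp add: numeral_2_eq_2)
    have p2: "Suc k choose 2 = k + (k choose 2)" by (simp add: numeral_2_eq_2)
    show ?thesis
    proof (cases "a = 0")
      case True
      then have "n - a - 1 = Suc k" using k by simp
      then show ?thesis using p1 k by simp
    next
      case False
      then have "n - a - 1 = k" using k a1 by simp
      then show ?thesis using p1 p2 k by simp
    qed
  qed
  have "(1/2::real) ^ (2 * n - 3) = 2 ^ card E' / 2 ^ (card E' + (2 * n - 3))"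
    by (simp add: power_add field_simps)
  also have "\<dots> \<le> 2 ^ card E' / 2 ^ card E"
    using comb cardE cardE' by (intro divide_left_mono) (auto intro: power_increasing)
  also have "\<dots> \<le> card ({G. \<not> even_degenerate n G} \<inter> Pow E) / 2 ^ card E"
    using cnt by (intro divide_right_mono) auto
  finally show ?thesis using prob by (simp add: Int_commute)
qed

end
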